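(* Let $\rho_m>0$, $f(\rho)=\rho_m-\rho$, and $0<\bar\rho<\frac{\rho_m}{2}$. There exist $K,c>0$ such that for any $T>0$ and any initial data $\psi_0,\varphi_T$, the linear system \[ \begin{cases} \partial_t\psi=(f(\bar\rho)-2\bar\rho)\partial_x\psi+\bar\rho f^2(\bar\rho)\Delta\varphi, & t\in(0,T),\\ \partial_t\varphi=f(\bar\rho)\partial_x\varphi-\frac{1}{f(\bar\rho)}\psi, & t\in(0,T),\\ \psi(\cdot,0)=\psi_0,\quad \varphi(\cdot,T)=\varphi_T & \end{cases} \] on $\mathbb{R}^2$ admits a solution on $[0,T]$ that satisfies, for all $\xi\in\mathbb{R}^2$ and $t\in[0,T]$, \[ (|\hat\psi|+|\xi\hat\varphi|)(\xi,t)\leqslant K\big(e^{-c|\xi|t}|\hat\psi_0(\xi)|+e^{-c|\xi|(T-t)}|\xi\hat\varphi_T(\xi)|\big). \]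
   Context: $\hat g(\xi,t)$ denotes the Fourier transform in the space variables $(x,y)\in\mathbb{R}^2$, $\xi=(\xi_1,\xi_2)$. A solution is understood frequency by frequency: for each $\xi\neq0$, $t\mapsto(\hat\psi,\hat\varphi)(\xi,t)$ solves the Fourier-transformed ODE system with $\hat\psi(\xi,0)=\hat\psi_0(\xi)$ and $\hat\varphi(\xi,T)=\hat\varphi_T(\xi)$. *)

theory Defs
  imports "HOL-Analysis.Analysis"
begin

definition f :: "real \<Rightarrow> real \<Rightarrow> real" where
  "f \<rho>m \<rho> = \<rho>m - \<rho>"

end

theory Submission imports Defs "HOL-Analysis.Analysis" begin

lemma real_bound:
  fixes X Z b g r \<mu> c t T q1 q2 :: real
  assumes X: "X \<ge> 0" and Z: "Z \<ge> 0" and b: "b > 0" and g: "g \<ge> 0" and r: "r > 0"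
    and c: "c > 0" and \<mu>: "\<mu> \<ge> c*r" and t: "0 \<le> t" "t \<le> T"
    and q1: "q1 \<le> (X*exp(\<mu>*T) + b*g*r*Z)/(b*\<mu>*exp(\<mu>*T))"
    and q2: "q2 \<le> (b*g*r*Z + X/exp(\<mu>*T))/(b*\<mu>*exp(\<mu>*T))"
  shows "r*q1*exp(-\<mu>*t) + r*q2*exp(\<mu>*t)
     \<le> 2*(1/(b*c))*X*exp(-c*r*t) + 2*(g/c)*(r*Z)*exp(-c*r*(T-t))"
proof -
  have \<mu>p: "\<mu> > 0" using c r \<mu> by (smt (verit) mult_pos_pos)
  define u where "u = exp(\<mu>*T)"
  have u: "u > 0" unfolding u_def by simp
  have rm: "r/\<mu> \<le> 1/c" using \<mu> \<mu>p c r by (simp add: field_simps)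
  have "r*q1 \<le> r*((X*u + b*g*r*Z)/(b*\<mu>*u))" using mult_left_mono[OF q1, of r] r u_def by simp
  also have "\<dots> = (r/\<mu>)*(X/b + g*(r*Z)/u)" using b u \<mu>p by (simp add: field_simps)
  also have "\<dots> \<le> (1/c)*(X/b + g*(r*Z)/u)"
    by (rule mult_right_mono[OF rm]) (use X Z b u g r in simp)
  also have "\<dots> = (1/(b*c))*X + (g/c)*(r*Z)/u" using b c u by (simp add: field_simps)
  finally have rq1: "r*q1 \<le> (1/(b*c))*X + (g/c)*(r*Z)/u" .
  have "r*q2 \<le> r*((b*g*r*Z + X/u)/(b*\<mu>*u))" using mult_left_mono[OF q2, of r] r u_def by simp
  also have "\<dots> = (r/\<mu>)*(g*(r*Z)/u + X/(b*u*u))" using b u \<mu>p by (simp add: field_simps)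
  also have "\<dots> \<le> (1/c)*(g*(r*Z)/u + X/(b*u*u))"
    by (rule mult_right_mono[OF rm]) (use X Z b u g r in simp)
  also have "\<dots> = (g/c)*(r*Z)/u + (1/(b*c))*X/(u*u)" using b c u by (simp add: field_simps)
  finally have rq2: "r*q2 \<le> (g/c)*(r*Z)/u + (1/(b*c))*X/(u*u)" .
  have e1: "exp(-\<mu>*t) \<le> exp(-c*r*t)" using \<mu> t by (simp add: mult_right_mono)
  have e2: "exp(\<mu>*(t-T)) \<le> exp(-c*r*(T-t))"
  proof -
    have "c*r*(T-t) \<le> \<mu>*(T-t)" using \<mu> t by (intro mult_right_mono) auto
    thus ?thesis by (simp add: algebra_simps)
  qed
  define A where "A = 1/(b*c)"
  define B where "B = g/c"
  have A: "A \<ge> 0" using b c A_def by simp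
  have B: "B \<ge> 0" using g c B_def by simp
  define E1 where "E1 = exp(-c*r*t)"
  define E2 where "E2 = exp(-c*r*(T-t))"
  have f1: "exp(-\<mu>*t)/u \<le> E2"
  proof -
    have "exp(-\<mu>*t)/u = exp(-\<mu>*t - \<mu>*T)" unfolding u_def by (simp add: exp_diff)
    also have "\<dots> \<le> exp(\<mu>*(t-T))" using \<mu>p t by (simp add: algebra_simps)
    finally show ?thesis using e2 unfolding E2_def by linarith
  qed
  have f2: "exp(\<mu>*t)/u \<le> E2"
  proof -
    have "exp(\<mu>*t)/u = exp(\<mu>*(t-T))" unfolding u_def by (simp add: exp_diff algebra_simps)
    thus ?thesis using e2 unfolding E2_def by linarith
  qed
  have f3: "exp(\<mu>*t)/(u*u) \<le> E1"
  proof -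
    have "exp(\<mu>*t)/(u*u) = exp(\<mu>*t - \<mu>*T - \<mu>*T)" unfolding u_def by (simp only: exp_diff divide_divide_eq_left)
    also have "\<dots> \<le> exp(-\<mu>*t)" using \<mu>p t by (simp add: algebra_simps)
    finally show ?thesis using e1 unfolding E1_def by linarith
  qed
  have g1: "r*q1*exp(-\<mu>*t) \<le> A*X*E1 + B*(r*Z)*E2"
  proof -
    have "r*q1*exp(-\<mu>*t) \<le> (A*X + B*(r*Z)/u)*exp(-\<mu>*t)"
      using rq1 A_def B_def by (intro mult_right_mono) auto
    also have "\<dots> = A*X*exp(-\<mu>*t) + B*(r*Z)*(exp(-\<mu>*t)/u)" by (simp add: algebra_simps)
    also have "\<dots> \<le> A*X*E1 + B*(r*Z)*E2"
      using e1 f1 A B X Z r E1_def by (intro add_mono mult_left_mono) auto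
    finally show ?thesis .
  qed
  have g2: "r*q2*exp(\<mu>*t) \<le> A*X*E1 + B*(r*Z)*E2"
  proof -
    have "r*q2*exp(\<mu>*t) \<le> (B*(r*Z)/u + A*X/(u*u))*exp(\<mu>*t)"
      using rq2 A_def B_def by (intro mult_right_mono) auto
    also have "\<dots> = B*(r*Z)*(exp(\<mu>*t)/u) + A*X*(exp(\<mu>*t)/(u*u))" by (simp add: algebra_simps)
    also have "\<dots> \<le> B*(r*Z)*E2 + A*X*E1"
      using f2 f3 A B X Z r by (intro add_mono mult_left_mono) auto
    finally show ?thesis by simp
  qed
  have "r*q1*exp(-\<mu>*t) + r*q2*exp(\<mu>*t) \<le> 2*A*X*E1 + 2*B*(r*Z)*E2" using g1 g2 by linarith
  thus ?thesis unfolding A_def B_def E1_def E2_def by (simp add: mult.assoc)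
qed

definition cc :: "real \<Rightarrow> real \<Rightarrow> real" where "cc b \<rho> = sqrt(\<rho>*(b-\<rho>))"
definition KK :: "real \<Rightarrow> real \<Rightarrow> real" where
  "KK b \<rho> = (1 + b * sqrt(\<rho>*b)) * (2*(1/(b*cc b \<rho>)) + 2*(sqrt(\<rho>*b)/cc b \<rho>))"

lemma core:
  fixes b \<rho> k r T :: real and p0 q :: complex
  assumes \<rho>: "0<\<rho>" "\<rho><b" and T: "T>0" and r: "r>0" and kr: "\<bar>k\<bar> \<le> r"
  shows "\<exists>\<psi> \<phi>. \<psi> 0 = p0 \<and> \<phi> T = q \<and>
    (\<forall>t\<in>{0..T}. (\<psi> has_vector_derivative
        (complex_of_real (b - 2*\<rho>) * \<i> * complex_of_real k * \<psi> t
         + complex_of_real (\<rho> * b\<^sup>2) * (- complex_of_real (r\<^sup>2)) * \<phi> t)) (at t within {0..T}) \<and>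
      (\<phi> has_vector_derivative
        (complex_of_real b * \<i> * complex_of_real k * \<phi> t
         - complex_of_real (1 / b) * \<psi> t)) (at t within {0..T})) \<and>
    (\<forall>t\<in>{0..T}. cmod (\<psi> t) + r * cmod (\<phi> t)
       \<le> KK b \<rho> * (exp (- cc b \<rho> * r * t) * cmod p0 + exp (- cc b \<rho> * r * (T - t)) * (r * cmod q)))"
proof -
  have b: "b > 0" using \<rho> by simp
  define D where "D = \<rho>*b*r\<^sup>2 - \<rho>\<^sup>2*k\<^sup>2"
  have "k\<^sup>2 \<le> r\<^sup>2" using r kr abs_le_square_iff by (metis abs_of_pos)
  moreover have "D - \<rho>*(b-\<rho>)*r\<^sup>2 = \<rho>\<^sup>2*(r\<^sup>2-k\<^sup>2)"
    unfolding D_def by (simp add: algebra_simps power2_eq_square)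
  ultimately have Dlow: "\<rho>*(b-\<rho>)*r\<^sup>2 \<le> D"
    by (smt (verit) mult_nonneg_nonneg zero_le_power2)
  have Dpos: "D > 0" using Dlow \<rho> r by (smt (verit) mult_pos_pos zero_less_power)
  define \<mu> where "\<mu> = sqrt D"
  have \<mu>pos: "\<mu> > 0" using Dpos \<mu>_def by simp
  have \<mu>2: "\<mu>*\<mu> = D" using Dpos \<mu>_def by simp
  define c where "c = cc b \<rho>"
  have c: "c > 0" using \<rho> unfolding c_def cc_def by simp
  have \<mu>c: "\<mu> \<ge> c*r"
  proof -
    have "c*r = sqrt(\<rho>*(b-\<rho>)*r\<^sup>2)" using r \<rho> unfolding c_def cc_def by (simp add: real_sqrt_mult)
    also have "\<dots> \<le> \<mu>" unfolding \<mu>_def using Dlow by simp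
    finally show ?thesis .
  qed
  define g where "g = sqrt(\<rho>*b)"
  have g: "g \<ge> 0" using \<rho> g_def by simp
  define m where "m = complex_of_real \<mu>"
  define ik where "ik = \<i> * complex_of_real (\<rho>*k)"
  have key: "(m+ik)*(ik-m) = - complex_of_real (\<rho>*b*r\<^sup>2)"
  proof -
    have "(m+ik)*(ik-m) = ik*ik - m*m" by (simp add: algebra_simps)
    also have "m*m = of_real D" unfolding m_def by (metis \<mu>2 of_real_mult)
    also have "ik*ik = - of_real ((\<rho>*k)\<^sup>2)" unfolding ik_def
      by (simp add: algebra_simps power2_eq_square)
    finally show ?thesis unfolding D_def by (simp add: algebra_simps)
  qed
  have nrm: "cmod (m+ik) = g*r" "cmod (ik-m) = g*r"
  proof -
    have "\<mu>*\<mu> + (\<rho>*k)*(\<rho>*k) = \<rho>*b*r\<^sup>2" using \<mu>2 unfolding D_def by (simp add: power2_eq_square)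
    hence s: "sqrt (\<mu>\<^sup>2 + (\<rho>*k)\<^sup>2) = g*r" using r \<rho> unfolding g_def
      by (simp add: power2_eq_square real_sqrt_mult)
    have "m+ik = Complex \<mu> (\<rho>*k)" unfolding m_def ik_def by (simp add: complex_eq_iff)
    thus "cmod (m+ik) = g*r" using s by (simp add: cmod_def)
    have "ik-m = Complex (-\<mu>) (\<rho>*k)" unfolding m_def ik_def by (simp add: complex_eq_iff)
    thus "cmod (ik-m) = g*r" using s by (simp add: cmod_def)
  qed
  define \<theta> where "\<theta> = (b-\<rho>)*k"
  define l1 where "l1 = \<i>*complex_of_real \<theta> - m"
  define l2 where "l2 = \<i>*complex_of_real \<theta> + m"
  define a where "a = b - 2*\<rho>"
  have l1a: "l1 = complex_of_real a * \<i> * complex_of_real k + (ik - m)"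
    unfolding l1_def a_def ik_def \<theta>_def by (simp add: algebra_simps)
  have l2a: "l2 = complex_of_real a * \<i> * complex_of_real k + (ik + m)"
    unfolding l2_def a_def ik_def \<theta>_def by (simp add: algebra_simps)
  have l1b: "l1 = complex_of_real b * \<i> * complex_of_real k - (m + ik)"
    unfolding l1_def ik_def \<theta>_def by (simp add: algebra_simps)
  have l2b: "l2 = complex_of_real b * \<i> * complex_of_real k + (m - ik)"
    unfolding l2_def ik_def \<theta>_def by (simp add: algebra_simps)
  define u where "u = exp (\<mu>*T)"
  have u: "u > 0" using u_def by simp
  define w where "w = exp (\<i>*complex_of_real (\<theta>*T))"
  have w: "cmod w = 1" unfolding w_def by simp
  have E2: "exp (complex_of_real T * l2) = w * complex_of_real u"
    unfolding w_def u_def l2_def m_def by (simp add: algebra_simps exp_add flip: exp_of_real)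
  have E1: "exp (complex_of_real T * l1) = w / complex_of_real u"
    unfolding w_def u_def l1_def m_def by (simp add: algebra_simps exp_diff flip: exp_of_real)
  define \<Delta> where "\<Delta> = complex_of_real b*(m+ik)*exp(complex_of_real T*l2) - complex_of_real b*(ik-m)*exp(complex_of_real T*l1)"
  have \<Delta>low: "cmod \<Delta> \<ge> b*\<mu>*u"
  proof -
    define z where "z = (m+ik)*complex_of_real u - (ik-m)/complex_of_real u"
    have "\<Delta> = complex_of_real b * w * z" unfolding \<Delta>_def z_def E1 E2 using u by (simp add: field_simps)
    hence "cmod \<Delta> = b * cmod z" using w b by (simp add: norm_mult)
    moreover have "Re z = \<mu>*u + \<mu>/u" unfolding z_def m_def ik_def using u by (simp add: Re_divide power2_eq_square)
    moreover have "\<bar>Re z\<bar> \<le> cmod z" by (rule abs_Re_le_cmod)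
    moreover have "\<mu>/u \<ge> 0" using u \<mu>pos by simp
    ultimately show ?thesis using b \<mu>pos u by (smt (verit, best) mult_left_mono mult.assoc)
  qed
  have \<Delta>nz: "\<Delta> \<noteq> 0" using \<Delta>low b \<mu>pos u by (smt (verit) mult_pos_pos norm_zero)
  define N1 where "N1 = p0*exp(complex_of_real T*l2) - complex_of_real b*(ik-m)*q"
  define N2 where "N2 = complex_of_real b*(m+ik)*q - exp(complex_of_real T*l1)*p0"
  define Q1 where "Q1 = N1/\<Delta>"
  define Q2 where "Q2 = N2/\<Delta>"
  define P1 where "P1 = complex_of_real b*(m+ik)*Q1"
  define P2 where "P2 = complex_of_real b*(ik-m)*Q2"
  define \<psi> where "\<psi> = (\<lambda>s::real. P1*exp(complex_of_real s*l1) + P2*exp(complex_of_real s*l2))"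
  define \<phi> where "\<phi> = (\<lambda>s::real. Q1*exp(complex_of_real s*l1) + Q2*exp(complex_of_real s*l2))"
  have bc0: "\<psi> 0 = p0"
  proof -
    have "complex_of_real b*(m+ik)*N1 + complex_of_real b*(ik-m)*N2 = p0*\<Delta>"
      unfolding N1_def N2_def \<Delta>_def by (simp add: algebra_simps)
    hence "P1 + P2 = p0*\<Delta>/\<Delta>" unfolding P1_def P2_def Q1_def Q2_def
      by (simp add: add_divide_distrib[symmetric])
    thus ?thesis unfolding \<psi>_def using \<Delta>nz by simp
  qed
  have bcT: "\<phi> T = q"
  proof -
    have "N1*exp(complex_of_real T*l1) + N2*exp(complex_of_real T*l2) = q*\<Delta>"
      unfolding N1_def N2_def \<Delta>_def by (simp add: algebra_simps)
    hence "Q1*exp(complex_of_real T*l1) + Q2*exp(complex_of_real T*l2) = q*\<Delta>/\<Delta>" unfolding Q1_def Q2_def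
      by (simp add: add_divide_distrib[symmetric])
    thus ?thesis unfolding \<phi>_def using \<Delta>nz by simp
  qed
  have id1: "P1*l1 = complex_of_real a * \<i> * complex_of_real k * P1 + complex_of_real (\<rho> * b\<^sup>2) * (- complex_of_real (r\<^sup>2)) * Q1"
  proof -
    have "P1*l1 = complex_of_real a * \<i> * complex_of_real k * P1 + complex_of_real b*((m+ik)*(ik-m))*Q1"
      unfolding P1_def l1a by (simp add: algebra_simps)
    thus ?thesis unfolding key by (simp add: power2_eq_square)
  qed
  have id2: "P2*l2 = complex_of_real a * \<i> * complex_of_real k * P2 + complex_of_real (\<rho> * b\<^sup>2) * (- complex_of_real (r\<^sup>2)) * Q2"
  proof -
    have "P2*l2 = complex_of_real a * \<i> * complex_of_real k * P2 + complex_of_real b*((m+ik)*(ik-m))*Q2"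
      unfolding P2_def l2a by (simp add: algebra_simps)
    thus ?thesis unfolding key by (simp add: power2_eq_square)
  qed
  have id3: "Q1*l1 = complex_of_real b * \<i> * complex_of_real k * Q1 - complex_of_real (1/b) * P1"
    unfolding P1_def l1b using b by (simp add: algebra_simps)
  have id4: "Q2*l2 = complex_of_real b * \<i> * complex_of_real k * Q2 - complex_of_real (1/b) * P2"
    unfolding P2_def l2b using b by (simp add: algebra_simps)
  have d\<psi>: "(\<psi> has_vector_derivative (P1*l1*exp(complex_of_real t*l1) + P2*l2*exp(complex_of_real t*l2))) (at t within {0..T})" for t
  proof -
    have "((\<lambda>z. P1*exp(z*l1) + P2*exp(z*l2)) has_field_derivative (P1*l1*exp(complex_of_real t*l1) + P2*l2*exp(complex_of_real t*l2))) (at (complex_of_real t))"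
      by (auto intro!: derivative_eq_intros simp: algebra_simps)
    from has_vector_derivative_real_field[OF this] show ?thesis unfolding \<psi>_def .
  qed
  have d\<phi>: "(\<phi> has_vector_derivative (Q1*l1*exp(complex_of_real t*l1) + Q2*l2*exp(complex_of_real t*l2))) (at t within {0..T})" for t
  proof -
    have "((\<lambda>z. Q1*exp(z*l1) + Q2*exp(z*l2)) has_field_derivative (Q1*l1*exp(complex_of_real t*l1) + Q2*l2*exp(complex_of_real t*l2))) (at (complex_of_real t))"
      by (auto intro!: derivative_eq_intros simp: algebra_simps)
    from has_vector_derivative_real_field[OF this] show ?thesis unfolding \<phi>_def .
  qed
  show ?thesis
  proof (rule exI[of _ \<psi>], rule exI[of _ \<phi>], intro conjI ballI bc0 bcT)
    fix t assume t: "t \<in> {0..T}"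
    show "(\<psi> has_vector_derivative
        (complex_of_real (b - 2*\<rho>) * \<i> * complex_of_real k * \<psi> t
         + complex_of_real (\<rho> * b\<^sup>2) * (- complex_of_real (r\<^sup>2)) * \<phi> t)) (at t within {0..T})"
      using d\<psi>[of t] unfolding a_def[symmetric] id1 id2 by (simp add: \<psi>_def \<phi>_def algebra_simps)
    show "(\<phi> has_vector_derivative
        (complex_of_real b * \<i> * complex_of_real k * \<phi> t
         - complex_of_real (1 / b) * \<psi> t)) (at t within {0..T})"
      using d\<phi>[of t] unfolding id3 id4 by (simp add: \<psi>_def \<phi>_def algebra_simps)
  next
    fix t assume t: "t \<in> {0..T}"
    show "cmod (\<psi> t) + r * cmod (\<phi> t)
       \<le> KK b \<rho> * (exp (- cc b \<rho> * r * t) * cmod p0 + exp (- cc b \<rho> * r * (T - t)) * (r * cmod q))"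
    proof -
      have t0: "0 \<le> t" "t \<le> T" using t by auto
      define X where "X = cmod p0"
      define Z where "Z = cmod q"
      have X: "X \<ge> 0" and Z: "Z \<ge> 0" using X_def Z_def by auto
      have nE1: "cmod (exp (complex_of_real T*l1)) = 1/u" unfolding E1 using w u by (simp add: norm_divide)
      have nE2: "cmod (exp (complex_of_real T*l2)) = u" unfolding E2 using w u by (simp add: norm_mult)
      have bmu: "b*\<mu>*u > 0" using b \<mu>pos u by simp
      have q1: "cmod Q1 \<le> (X*exp(\<mu>*T) + b*g*r*Z)/(b*\<mu>*exp(\<mu>*T))"
      proof -
        have "cmod N1 \<le> cmod (p0*exp(complex_of_real T*l2)) + cmod (complex_of_real b*(ik-m)*q)"
          unfolding N1_def by (rule norm_triangle_ineq4)
        also have "\<dots> = X*u + b*(g*r)*Z" unfolding X_def Z_def using b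
          by (simp add: norm_mult nrm nE2 del: norm_exp_eq_Re)
        finally have "cmod N1 \<le> X*u + b*(g*r)*Z" .
        moreover have "0 \<le> X*u + b*g*r*Z" using X Z b g r u by simp
        ultimately have "cmod N1 / cmod \<Delta> \<le> (X*u + b*g*r*Z)/(b*\<mu>*u)"
          using \<Delta>low bmu by (intro frac_le) (auto simp: mult.assoc)
        thus ?thesis unfolding Q1_def u_def by (simp add: norm_divide)
      qed
      have q2: "cmod Q2 \<le> (b*g*r*Z + X/exp(\<mu>*T))/(b*\<mu>*exp(\<mu>*T))"
      proof -
        have "cmod N2 \<le> cmod (complex_of_real b*(m+ik)*q) + cmod (exp(complex_of_real T*l1)*p0)"
          unfolding N2_def by (rule norm_triangle_ineq4)
        also have "\<dots> = b*(g*r)*Z + X/u" unfolding X_def Z_def using b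
          by (simp add: norm_mult nrm nE1 del: norm_exp_eq_Re)
        finally have "cmod N2 \<le> b*(g*r)*Z + X/u" .
        moreover have "0 \<le> b*g*r*Z + X/u" using X Z b g r u by simp
        ultimately have "cmod N2 / cmod \<Delta> \<le> (b*g*r*Z + X/u)/(b*\<mu>*u)"
          using \<Delta>low bmu by (intro frac_le) (auto simp: mult.assoc)
        thus ?thesis unfolding Q2_def u_def by (simp add: norm_divide)
      qed
      note rb = real_bound[OF X Z b g r c \<mu>c t0 q1 q2]
      define e1 where "e1 = exp(-\<mu>*t)"
      define e2 where "e2 = exp(\<mu>*t)"
      have ne1: "cmod (exp (complex_of_real t * l1)) = e1" unfolding e1_def l1_def m_def by simp
      have ne2: "cmod (exp (complex_of_real t * l2)) = e2" unfolding e2_def l2_def m_def by simp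
      have nP1: "cmod P1 = b*(g*r)*cmod Q1" unfolding P1_def using b by (simp add: norm_mult nrm)
      have nP2: "cmod P2 = b*(g*r)*cmod Q2" unfolding P2_def using b by (simp add: norm_mult nrm)
      have n\<psi>: "cmod (\<psi> t) \<le> b*(g*r)*cmod Q1*e1 + b*(g*r)*cmod Q2*e2"
      proof -
        have "cmod (\<psi> t) \<le> cmod (P1*exp(complex_of_real t*l1)) + cmod (P2*exp(complex_of_real t*l2))"
          unfolding \<psi>_def by (rule norm_triangle_ineq)
        also have "\<dots> = b*(g*r)*cmod Q1*e1 + b*(g*r)*cmod Q2*e2"
          by (simp only: norm_mult ne1 ne2 nP1 nP2)
        finally show ?thesis .
      qed
      have n\<phi>: "cmod (\<phi> t) \<le> cmod Q1*e1 + cmod Q2*e2"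
      proof -
        have "cmod (\<phi> t) \<le> cmod (Q1*exp(complex_of_real t*l1)) + cmod (Q2*exp(complex_of_real t*l2))"
          unfolding \<phi>_def by (rule norm_triangle_ineq)
        also have "\<dots> = cmod Q1*e1 + cmod Q2*e2"
          by (simp only: norm_mult ne1 ne2)
        finally show ?thesis .
      qed
      define A where "A = 1/(b*c)"
      define B where "B = g/c"
      define F1 where "F1 = exp(-c*r*t)"
      define F2 where "F2 = exp(-c*r*(T-t))"
      have A: "A \<ge> 0" using b c A_def by simp
      have B: "B \<ge> 0" using g c B_def by simp
      have S: "r*cmod Q1*e1 + r*cmod Q2*e2 \<le> 2*A*X*F1 + 2*B*(r*Z)*F2"
        using rb unfolding A_def B_def F1_def F2_def e1_def e2_def by simp
      have bg: "b*g \<ge> 0" using b g by simp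
      have "cmod (\<psi> t) + r * cmod (\<phi> t) \<le> (b*g+1)*(r*cmod Q1*e1 + r*cmod Q2*e2)"
        using n\<psi> mult_left_mono[OF n\<phi>, of r] r by (simp add: algebra_simps)
      also have "\<dots> \<le> (b*g+1)*(2*A*X*F1 + 2*B*(r*Z)*F2)"
        using S bg by (intro mult_left_mono) auto
      also have "\<dots> \<le> (b*g+1)*((2*A + 2*B)*(F1*X + F2*(r*Z)))"
      proof (intro mult_left_mono)
        have "0 \<le> 2*A*(F2*(r*Z)) + 2*B*(F1*X)" using A B X Z r F1_def F2_def by simp
        thus "2*A*X*F1 + 2*B*(r*Z)*F2 \<le> (2*A + 2*B)*(F1*X + F2*(r*Z))"
          by (simp add: algebra_simps)
      qed (use bg in simp)
      also have "\<dots> = KK b \<rho> * (exp (- cc b \<rho> * r * t) * cmod p0 + exp (- cc b \<rho> * r * (T - t)) * (r * cmod q))"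
        unfolding KK_def c_def[symmetric] g_def[symmetric] A_def B_def F1_def F2_def X_def Z_def by (simp add: algebra_simps)
      finally show ?thesis .
    qed
  qed
qed

theorem lemma5:
  fixes \<rho>m \<rho>b :: real
  assumes "\<rho>m > 0" and "0 < \<rho>b" and "\<rho>b < \<rho>m / 2"
  shows "\<exists>K c. K > 0 \<and> c > 0 \<and>
    (\<forall>T > 0. \<forall>\<psi>0 \<phi>T :: real^2 \<Rightarrow> complex.
      \<exists>\<psi> \<phi> :: real^2 \<Rightarrow> real \<Rightarrow> complex.
        (\<forall>\<xi>. \<xi> \<noteq> 0 \<longrightarrow>
           \<psi> \<xi> 0 = \<psi>0 \<xi> \<and> \<phi> \<xi> T = \<phi>T \<xi> \<and>
           (\<forall>t \<in> {0..T}.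
              ((\<lambda>s. \<psi> \<xi> s) has_vector_derivative
                 (complex_of_real (f \<rho>m \<rho>b - 2 * \<rho>b) * \<i> * complex_of_real (\<xi> $ 1) * \<psi> \<xi> t
                  + complex_of_real (\<rho>b * (f \<rho>m \<rho>b)\<^sup>2) * (- complex_of_real ((norm \<xi>)\<^sup>2)) * \<phi> \<xi> t))
                (at t within {0..T}) \<and>
              ((\<lambda>s. \<phi> \<xi> s) has_vector_derivative
                 (complex_of_real (f \<rho>m \<rho>b) * \<i> * complex_of_real (\<xi> $ 1) * \<phi> \<xi> t
                  - complex_of_real (1 / f \<rho>m \<rho>b) * \<psi> \<xi> t))
                (at t within {0..T}))) \<and>
        (\<forall>\<xi>. \<forall>t \<in> {0..T}.
           cmod (\<psi> \<xi> t) + norm \<xi> * cmod (\<phi> \<xi> t)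
             \<le> K * (exp (- c * norm \<xi> * t) * cmod (\<psi>0 \<xi>)
                    + exp (- c * norm \<xi> * (T - t)) * (norm \<xi> * cmod (\<phi>T \<xi>)))))"
proof -
  define bb where "bb = f \<rho>m \<rho>b"
  have \<rho>: "0 < \<rho>b" "\<rho>b < bb" using assms unfolding bb_def f_def by auto
  define K where "K = KK bb \<rho>b"
  define c where "c = cc bb \<rho>b"
  have c: "c > 0" using \<rho> unfolding c_def cc_def by simp
  have K: "K > 0"
  proof -
    have "sqrt (\<rho>b*bb) \<ge> 0" using \<rho> by simp
    hence "(1 + bb * sqrt(\<rho>b*bb)) > 0" "(2*(1/(bb*c)) + 2*(sqrt(\<rho>b*bb)/c)) > 0"
      using \<rho> c by (auto intro!: add_pos_nonneg)
    thus ?thesis unfolding K_def KK_def c_def[symmetric] by simp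
  qed
  show ?thesis
  proof (rule exI[of _ K], rule exI[of _ c], intro conjI K c allI impI)
    fix T :: real and \<psi>0 \<phi>T :: "real^2 \<Rightarrow> complex"
    assume T: "T > 0"
    have "\<forall>\<xi>. \<exists>\<psi>' \<phi>'. (\<xi> \<noteq> 0 \<longrightarrow>
           \<psi>' 0 = \<psi>0 \<xi> \<and> \<phi>' T = \<phi>T \<xi> \<and>
           (\<forall>t \<in> {0..T}.
              (\<psi>' has_vector_derivative
                 (complex_of_real (f \<rho>m \<rho>b - 2 * \<rho>b) * \<i> * complex_of_real (\<xi> $ 1) * \<psi>' t
                  + complex_of_real (\<rho>b * (f \<rho>m \<rho>b)\<^sup>2) * (- complex_of_real ((norm \<xi>)\<^sup>2)) * \<phi>' t))
                (at t within {0..T}) \<and>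
              (\<phi>' has_vector_derivative
                 (complex_of_real (f \<rho>m \<rho>b) * \<i> * complex_of_real (\<xi> $ 1) * \<phi>' t
                  - complex_of_real (1 / f \<rho>m \<rho>b) * \<psi>' t))
                (at t within {0..T}))) \<and>
        (\<forall>t \<in> {0..T}.
           cmod (\<psi>' t) + norm \<xi> * cmod (\<phi>' t)
             \<le> K * (exp (- c * norm \<xi> * t) * cmod (\<psi>0 \<xi>)
                    + exp (- c * norm \<xi> * (T - t)) * (norm \<xi> * cmod (\<phi>T \<xi>))))"
    proof
      fix \<xi> :: "real^2"
      show "\<exists>\<psi>' \<phi>'. (\<xi> \<noteq> 0 \<longrightarrow>
           \<psi>' 0 = \<psi>0 \<xi> \<and> \<phi>' T = \<phi>T \<xi> \<and>
           (\<forall>t \<in> {0..T}.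
              (\<psi>' has_vector_derivative
                 (complex_of_real (f \<rho>m \<rho>b - 2 * \<rho>b) * \<i> * complex_of_real (\<xi> $ 1) * \<psi>' t
                  + complex_of_real (\<rho>b * (f \<rho>m \<rho>b)\<^sup>2) * (- complex_of_real ((norm \<xi>)\<^sup>2)) * \<phi>' t))
                (at t within {0..T}) \<and>
              (\<phi>' has_vector_derivative
                 (complex_of_real (f \<rho>m \<rho>b) * \<i> * complex_of_real (\<xi> $ 1) * \<phi>' t
                  - complex_of_real (1 / f \<rho>m \<rho>b) * \<psi>' t))
                (at t within {0..T}))) \<and>
        (\<forall>t \<in> {0..T}.
           cmod (\<psi>' t) + norm \<xi> * cmod (\<phi>' t)
             \<le> K * (exp (- c * norm \<xi> * t) * cmod (\<psi>0 \<xi>)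
                    + exp (- c * norm \<xi> * (T - t)) * (norm \<xi> * cmod (\<phi>T \<xi>))))"
      proof (cases "\<xi> = 0")
        case True
        show ?thesis
          by (rule exI[of _ "\<lambda>_. 0"], rule exI[of _ "\<lambda>_. 0"]) (use True K in simp)
      next
        case False
        have r: "norm \<xi> > 0" using False by simp
        have kr: "\<bar>\<xi> $ 1\<bar> \<le> norm \<xi>" by (rule component_le_norm_cart)
        from core[OF \<rho> T r kr, of "\<psi>0 \<xi>" "\<phi>T \<xi>"] show ?thesis
          unfolding K_def c_def bb_def by blast
      qed
    qed
    then obtain \<Psi> \<Phi> where H: "\<And>\<xi>. (\<xi> \<noteq> 0 \<longrightarrow>
           \<Psi> \<xi> 0 = \<psi>0 \<xi> \<and> \<Phi> \<xi> T = \<phi>T \<xi> \<and>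
           (\<forall>t \<in> {0..T}.
              (\<Psi> \<xi> has_vector_derivative
                 (complex_of_real (f \<rho>m \<rho>b - 2 * \<rho>b) * \<i> * complex_of_real (\<xi> $ 1) * \<Psi> \<xi> t
                  + complex_of_real (\<rho>b * (f \<rho>m \<rho>b)\<^sup>2) * (- complex_of_real ((norm \<xi>)\<^sup>2)) * \<Phi> \<xi> t))
                (at t within {0..T}) \<and>
              (\<Phi> \<xi> has_vector_derivative
                 (complex_of_real (f \<rho>m \<rho>b) * \<i> * complex_of_real (\<xi> $ 1) * \<Phi> \<xi> t
                  - complex_of_real (1 / f \<rho>m \<rho>b) * \<Psi> \<xi> t))
                (at t within {0..T}))) \<and>
        (\<forall>t \<in> {0..T}.
           cmod (\<Psi> \<xi> t) + norm \<xi> * cmod (\<Phi> \<xi> t)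
             \<le> K * (exp (- c * norm \<xi> * t) * cmod (\<psi>0 \<xi>)
                    + exp (- c * norm \<xi> * (T - t)) * (norm \<xi> * cmod (\<phi>T \<xi>))))"
      by metis
    show "\<exists>\<psi> \<phi> :: real^2 \<Rightarrow> real \<Rightarrow> complex.
        (\<forall>\<xi>. \<xi> \<noteq> 0 \<longrightarrow>
           \<psi> \<xi> 0 = \<psi>0 \<xi> \<and> \<phi> \<xi> T = \<phi>T \<xi> \<and>
           (\<forall>t \<in> {0..T}.
              ((\<lambda>s. \<psi> \<xi> s) has_vector_derivative
                 (complex_of_real (f \<rho>m \<rho>b - 2 * \<rho>b) * \<i> * complex_of_real (\<xi> $ 1) * \<psi> \<xi> t
                  + complex_of_real (\<rho>b * (f \<rho>m \<rho>b)\<^sup>2) * (- complex_of_real ((norm \<xi>)\<^sup>2)) * \<phi> \<xi> t))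
                (at t within {0..T}) \<and>
              ((\<lambda>s. \<phi> \<xi> s) has_vector_derivative
                 (complex_of_real (f \<rho>m \<rho>b) * \<i> * complex_of_real (\<xi> $ 1) * \<phi> \<xi> t
                  - complex_of_real (1 / f \<rho>m \<rho>b) * \<psi> \<xi> t))
                (at t within {0..T}))) \<and>
        (\<forall>\<xi>. \<forall>t \<in> {0..T}.
           cmod (\<psi> \<xi> t) + norm \<xi> * cmod (\<phi> \<xi> t)
             \<le> K * (exp (- c * norm \<xi> * t) * cmod (\<psi>0 \<xi>)
                    + exp (- c * norm \<xi> * (T - t)) * (norm \<xi> * cmod (\<phi>T \<xi>))))"
      by (rule exI[of _ \<Psi>], rule exI[of _ \<Phi>]) (use H in blast)
  qed
qed

end
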